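(* There exists a constant $C>0$ such that if $\omega\in L^1(\Pi)\cap L^2(\Pi)$ is non-negative and Steiner symmetric in the $x_1$-variable (i.e. $\omega(x_1,x_2)=\omega(-x_1,x_2)$ and $x_1\mapsto\omega(x_1,x_2)$ is non-increasing for $x_1>0$), then $$\mathcal G\omega(x)\le C\Big(|x_1|^{-3/8}\|\omega\|_1^{1/2}\|\omega\|_2^{1/2}+e^{-\sqrt{|x_1|}/2}\|\omega\|_1\Big)$$ for every $x=(x_1,x_2)\in\Pi$ with $|x_1|>4$.
   Context: Let $\Pi=\{x=(x_1,x_2)\in\mathbb R^2: x_2>0\}$ and for $x=(x_1,x_2)$ write $\bar x=(x_1,-x_2)$. Let $G(x,y)=\frac{1}{2\pi}K_0(|x-y|)$ be the fundamental solution of $-\Delta+\mathrm{Id}$ on $\mathbb R^2$ ($K_0$ the modified Bessel function of the second kind of order zero). Set $G_\Pi(x,y)=G(x,y)-G(\bar x,y)$ for $x,y\in\Pi$ and $\mathcal G\omega(x)=\int_\Pi G_\Pi(x,y)\omega(y)\,dy$. $\|\cdot\|_p$ denotes the $L^p(\Pi)$ norm. *)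

theory Defs
  imports "HOL-Analysis.Analysis"
begin

definition besselK0 :: "real \<Rightarrow> real" where
  "besselK0 r = (LINT t:{0..}|lborel. exp (- (r * cosh t)))"

definition upper_half :: "(real \<times> real) set" where
  "upper_half = {x. snd x > 0}"

definition reflect :: "real \<times> real \<Rightarrow> real \<times> real" where
  "reflect x = (fst x, - snd x)"

text \<open>Fundamental solution of -Delta + Id on R^2.\<close>
definition Gfund :: "real \<times> real \<Rightarrow> real \<times> real \<Rightarrow> real" where
  "Gfund x y = besselK0 (norm (x - y)) / (2 * pi)"

definition G_half :: "real \<times> real \<Rightarrow> real \<times> real \<Rightarrow> real" where
  "G_half x y = Gfund x y - Gfund (reflect x) y"

definition G_op :: "(real \<times> real \<Rightarrow> real) \<Rightarrow> real \<times> real \<Rightarrow> real" where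
  "G_op \<omega> x = (LINT y:upper_half|lborel. G_half x y * \<omega> y)"

definition Lnorm1 :: "(real \<times> real \<Rightarrow> real) \<Rightarrow> real" where
  "Lnorm1 \<omega> = (LINT y:upper_half|lborel. \<bar>\<omega> y\<bar>)"

definition Lnorm2 :: "(real \<times> real \<Rightarrow> real) \<Rightarrow> real" where
  "Lnorm2 \<omega> = sqrt (LINT y:upper_half|lborel. (\<omega> y)\<^sup>2)"

end

theory Submission
  imports Defs "HOL-Probability.Distributions"
begin

definition Kn :: "real \<Rightarrow> ennreal" where
  "Kn r = (\<integral>\<^sup>+ t. ennreal (exp (- (r * cosh t))) * indicator {0..} t \<partial>lborel)"

lemma cosh_meas[measurable]: "(cosh :: real \<Rightarrow> real) \<in> borel_measurable borel"
  by (intro borel_measurable_continuous_onI continuous_intros)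

lemma Kn_measurable[measurable]: "Kn \<in> borel_measurable borel"
proof -
  have "(\<lambda>(r,t). ennreal (exp (- (r * cosh t))) * indicator {0..} t) \<in> borel_measurable (borel \<Otimes>\<^sub>M lborel)"
    by (simp add: measurable_lborel2) measurable
  then show ?thesis unfolding Kn_def by (rule lborel.borel_measurable_nn_integral)
qed

lemma besselK0_nonneg: "besselK0 r \<ge> 0"
  unfolding besselK0_def set_lebesgue_integral_def by (intro integral_nonneg_AE) (auto simp: indicator_def)

lemma besselK0_le_Kn: "ennreal (besselK0 r) \<le> Kn r"
proof -
  have "besselK0 r = integral\<^sup>L lborel (\<lambda>t. indicator {0..} t * exp (- (r * cosh t)))"
    unfolding besselK0_def set_lebesgue_integral_def by simp
  also have "\<dots> = enn2real (\<integral>\<^sup>+ t. ennreal (indicator {0..} t * exp (- (r * cosh t))) \<partial>lborel)"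
    by (rule integral_eq_nn_integral) (simp_all add: measurable_lborel1 borel_measurable_indicator)
  also have "(\<integral>\<^sup>+ t. ennreal (indicator {0..} t * exp (- (r * cosh t))) \<partial>lborel) = Kn r"
    unfolding Kn_def by (intro nn_integral_cong) (auto simp: indicator_def)
  finally show ?thesis by (simp add: ennreal_enn2real_if)
qed

lemma Kn_antimono: assumes "r \<le> r'" shows "Kn r' \<le> Kn r"
  unfolding Kn_def
proof (intro nn_integral_mono)
  fix t :: real
  have "r * cosh t \<le> r' * cosh t" using assms by (intro mult_right_mono) (auto intro: less_imp_le)
  then show "ennreal (exp (- (r' * cosh t))) * indicator {0..} t \<le> ennreal (exp (- (r * cosh t))) * indicator {0..} t"
    by (intro mult_right_mono ennreal_leI) auto
qed

lemma Kn_half: assumes "r \<ge> 0" shows "Kn r \<le> ennreal (exp (- r / 2)) * Kn (r / 2)"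
proof -
  have "Kn r \<le> (\<integral>\<^sup>+ t. ennreal (exp (- r / 2)) * (ennreal (exp (- (r/2 * cosh t))) * indicator {0..} t) \<partial>lborel)"
    unfolding Kn_def
  proof (intro nn_integral_mono)
    fix t :: real
    have c: "cosh t \<ge> 1" by (rule cosh_real_ge_1)
    have "r/2 \<le> r/2 * cosh t" using c assms by (metis mult.right_neutral mult_left_mono zero_le_divide_iff zero_le_numeral)
    then have "exp (- (r * cosh t)) \<le> exp (- r / 2) * exp (- (r/2 * cosh t))"
      by (simp add: exp_add[symmetric])
    then show "ennreal (exp (- (r * cosh t))) * indicator {0..} t \<le> ennreal (exp (- r / 2)) * (ennreal (exp (- (r/2 * cosh t))) * indicator {0..} t)"
      by (simp add: ennreal_mult'[symmetric] mult.assoc[symmetric] indicator_def ennreal_leI)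
  qed
  also have "\<dots> = ennreal (exp (- r / 2)) * Kn (r / 2)"
    unfolding Kn_def by (intro nn_integral_cmult) measurable
  finally show ?thesis .
qed

lemma exp_Ici: assumes "c > 0"
  shows "(\<integral>\<^sup>+ t. ennreal (exp (- (c * t))) * indicator {0..} t \<partial>lborel) = ennreal (1 / c)"
proof -
  have "1 = (\<integral>\<^sup>+x. ennreal (x^0 * exp (-x)) * indicator {0 ..} x \<partial>lborel)"
    using nn_intergal_power_times_exp_Ici[of 0] by simp
  also have "\<dots> = \<bar>c\<bar> * (\<integral>\<^sup>+x. ennreal ((0 + c * x)^0 * exp (-(0 + c*x))) * indicator {0 ..} (0 + c * x) \<partial>lborel)"
    by (rule nn_integral_real_affine) (use assms in auto)
  also have "(\<integral>\<^sup>+x. ennreal ((0 + c * x)^0 * exp (-(0 + c*x))) * indicator {0 ..} (0 + c * x) \<partial>lborel)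
     = (\<integral>\<^sup>+ t. ennreal (exp (- (c * t))) * indicator {0..} t \<partial>lborel)"
    using assms by (intro nn_integral_cong) (auto simp: indicator_def zero_le_mult_iff)
  finally have "1 = ennreal c * (\<integral>\<^sup>+ t. ennreal (exp (- (c * t))) * indicator {0..} t \<partial>lborel)"
    using assms by simp
  moreover have "ennreal (1/c) * ennreal c = 1"
    using assms by (simp add: ennreal_mult''[symmetric])
  ultimately show ?thesis
    by (metis mult.assoc mult_1 mult.right_neutral)
qed

lemma cosh_ge_exp_half: "exp t / 2 \<le> cosh (t::real)"
  by (simp add: cosh_field_def divide_right_mono)

lemma Kn_le_inv: assumes "r > 0" shows "Kn r \<le> ennreal (2 / r)"
proof -
  have "Kn r \<le> (\<integral>\<^sup>+ t. ennreal (exp (- ((r/2) * t))) * indicator {0..} t \<partial>lborel)"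
    unfolding Kn_def
  proof (intro nn_integral_mono)
    fix t :: real
    have "exp t \<ge> 1 + t" by (rule exp_ge_add_one_self)
    then have "t / 2 \<le> cosh t" using cosh_ge_exp_half[of t] by linarith
    then have "r/2 * t \<le> r * cosh t" using assms
      by (metis mult.commute mult_left_mono less_imp_le times_divide_eq_right)
    then show "ennreal (exp (- (r * cosh t))) * indicator {0..} t \<le> ennreal (exp (- ((r/2) * t))) * indicator {0..} t"
      by (intro mult_right_mono ennreal_leI) auto
  qed
  also have "\<dots> = ennreal (2 / r)" using exp_Ici[of "r/2"] assms by simp
  finally show ?thesis .
qed

lemma nn_shift1: fixes h :: "real \<Rightarrow> ennreal" assumes [measurable]: "h \<in> borel_measurable borel"
  shows "(\<integral>\<^sup>+ s. h (s - u) \<partial>lborel) = (\<integral>\<^sup>+ s. h s \<partial>lborel)"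
  using nn_integral_real_affine[of "\<lambda>s. h (s - u)" 1 u] by simp

lemma nn_shift2: fixes h :: "real \<Rightarrow> ennreal" assumes [measurable]: "h \<in> borel_measurable borel"
  shows "(\<integral>\<^sup>+ s. h (u - s) \<partial>lborel) = (\<integral>\<^sup>+ s. h s \<partial>lborel)"
  using nn_integral_real_affine[of "\<lambda>s. h (u - s)" "-1" u] by simp

lemma exp_abs_int: assumes "c > 0"
  shows "(\<integral>\<^sup>+ s. ennreal (exp (- (c * \<bar>s - u\<bar>))) \<partial>lborel) \<le> ennreal (2 / c)"
proof -
  define h where "h = (\<lambda>v::real. ennreal (exp (- (c * v))) * indicator {0..} v)"
  have hm[measurable]: "h \<in> borel_measurable borel" unfolding h_def by measurable
  have "(\<integral>\<^sup>+ s. ennreal (exp (- (c * \<bar>s - u\<bar>))) \<partial>lborel) \<le> (\<integral>\<^sup>+ s. h (s - u) + h (u - s) \<partial>lborel)"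
  proof (intro nn_integral_mono)
    fix s :: real
    show "ennreal (exp (- (c * \<bar>s - u\<bar>))) \<le> h (s - u) + h (u - s)"
      unfolding h_def by (cases "s \<ge> u") (auto simp: indicator_def add_increasing2 add_increasing)
  qed
  also have "\<dots> = (\<integral>\<^sup>+ s. h (s - u) \<partial>lborel) + (\<integral>\<^sup>+ s. h (u - s) \<partial>lborel)"
    by (rule nn_integral_add) measurable
  also have "\<dots> = ennreal (1/c) + ennreal (1/c)"
    unfolding nn_shift1[OF hm] nn_shift2[OF hm] unfolding h_def using exp_Ici[OF assms] by simp
  also have "\<dots> = ennreal (2 / c)" using assms by (simp add: ennreal_plus[symmetric] del: ennreal_plus)
  finally show ?thesis .
qed

lemma Kn_marginal: "(\<integral>\<^sup>+ y. Kn (\<bar>y - u\<bar> / 2) \<partial>lborel) \<le> 8"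
proof -
  define F where "F = (\<lambda>(y::real, t::real). ennreal (exp (- (\<bar>y - u\<bar> / 2 * cosh t))) * indicator {0..} t)"
  have Fm[measurable]: "F \<in> borel_measurable (lborel \<Otimes>\<^sub>M lborel)"
    unfolding F_def by (simp add: measurable_lborel2) measurable
  have "(\<integral>\<^sup>+ y. Kn (\<bar>y - u\<bar> / 2) \<partial>lborel) = (\<integral>\<^sup>+ y. \<integral>\<^sup>+ t. F (y, t) \<partial>lborel \<partial>lborel)"
    unfolding Kn_def F_def by simp
  also have "\<dots> = (\<integral>\<^sup>+ t. \<integral>\<^sup>+ y. F (y, t) \<partial>lborel \<partial>lborel)"
    by (rule lborel_pair.Fubini[OF Fm, symmetric])
  also have "\<dots> \<le> (\<integral>\<^sup>+ t. ennreal 8 * (ennreal (exp (- (1 * t))) * indicator {0..} t) \<partial>lborel)"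
  proof (intro nn_integral_mono)
    fix t :: real
    show "(\<integral>\<^sup>+ y. F (y, t) \<partial>lborel) \<le> ennreal 8 * (ennreal (exp (- (1 * t))) * indicator {0..} t)"
    proof (cases "t \<ge> 0")
      case True
      have cp: "cosh t / 2 > 0" by simp
      have "(\<integral>\<^sup>+ y. F (y, t) \<partial>lborel) = (\<integral>\<^sup>+ y. ennreal (exp (- (cosh t / 2 * \<bar>y - u\<bar>))) \<partial>lborel)"
        unfolding F_def using True by (intro nn_integral_cong) (auto simp: mult.commute)
      also have "\<dots> \<le> ennreal (2 / (cosh t / 2))" by (rule exp_abs_int[OF cp])
      also have "\<dots> \<le> ennreal (8 * exp (- t))"
      proof (intro ennreal_leI)
        have "exp t / 2 \<le> cosh t" by (rule cosh_ge_exp_half)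
        then have "4 / cosh t \<le> 4 / (exp t / 2)" by (intro divide_left_mono) auto
        also have "\<dots> = 8 * exp (- t)" by (simp add: exp_minus field_simps)
        finally show "2 / (cosh t / 2) \<le> 8 * exp (- t)" by simp
      qed
      finally show ?thesis using True by (simp add: ennreal_mult')
    next
      case False
      then show ?thesis unfolding F_def by (simp add: indicator_def)
    qed
  qed
  also have "\<dots> = ennreal 8 * (\<integral>\<^sup>+ t. ennreal (exp (- (1 * t))) * indicator {0..} t \<partial>lborel)"
    by (rule nn_integral_cmult) measurable
  also have "\<dots> = 8" using exp_Ici[of 1] by simp
  finally show ?thesis .
qed

lemma steiner_gen:
  fixes f :: "real \<Rightarrow> real"
  assumes "c > 0" "\<And>s. 0 < s \<Longrightarrow> s \<le> c \<Longrightarrow> f c \<le> f s"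
  shows "ennreal (f c) * ennreal c \<le> (\<integral>\<^sup>+ s. ennreal (f s) * indicator {0<..} s \<partial>lborel)"
proof -
  have "ennreal (f c) * ennreal c = (\<integral>\<^sup>+ s. ennreal (f c) * indicator {0<..c} s \<partial>lborel)"
    using assms(1) by (simp add: nn_integral_cmult_indicator)
  also have "\<dots> \<le> (\<integral>\<^sup>+ s. ennreal (f s) * indicator {0<..} s \<partial>lborel)"
    using assms by (intro nn_integral_mono) (auto simp: indicator_def ennreal_leI)
  finally show ?thesis .
qed

lemma prod_int:
  fixes g h :: "real \<Rightarrow> ennreal"
  assumes [measurable]: "g \<in> borel_measurable borel" "h \<in> borel_measurable borel"
  shows "(\<integral>\<^sup>+ y. g (snd y) * h (fst y) \<partial>(lborel :: (real \<times> real) measure))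
          = (\<integral>\<^sup>+ v. g v \<partial>lborel) * (\<integral>\<^sup>+ s. h s \<partial>lborel)"
proof -
  have m: "(\<lambda>y::real\<times>real. g (snd y) * h (fst y)) \<in> borel_measurable (lborel \<Otimes>\<^sub>M lborel)"
    by (simp add: measurable_lborel2) measurable
  have "(\<integral>\<^sup>+ y. g (snd y) * h (fst y) \<partial>(lborel :: (real \<times> real) measure))
      = (\<integral>\<^sup>+ y. g (snd y) * h (fst y) \<partial>(lborel \<Otimes>\<^sub>M lborel))"
    by (simp add: lborel_prod)
  also have "\<dots> = (\<integral>\<^sup>+ v. (\<integral>\<^sup>+ s. g v * h s \<partial>lborel) \<partial>lborel)"
    using lborel_pair.nn_integral_snd[OF m] by simp
  also have "\<dots> = (\<integral>\<^sup>+ v. g v * (\<integral>\<^sup>+ s. h s \<partial>lborel) \<partial>lborel)"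
    by (intro nn_integral_cong nn_integral_cmult) measurable
  also have "\<dots> = (\<integral>\<^sup>+ v. g v \<partial>lborel) * (\<integral>\<^sup>+ s. h s \<partial>lborel)"
    by (rule nn_integral_multc) measurable
  finally show ?thesis .
qed

lemma half_int:
  fixes q :: "real \<times> real \<Rightarrow> real"
  assumes [measurable]: "q \<in> borel_measurable borel"
  shows "(\<integral>\<^sup>+ v. indicator {0<..} v * (\<integral>\<^sup>+ s. ennreal (q (s, v)) * indicator {0<..} s \<partial>lborel) \<partial>lborel)
     \<le> (\<integral>\<^sup>+ y. indicator upper_half y * ennreal (q y) \<partial>lborel)"
proof -
  have qm[measurable]: "q \<in> borel_measurable (lborel \<Otimes>\<^sub>M lborel)"
    by (simp add: lborel_prod measurable_lborel1)
  have m: "(\<lambda>y::real\<times>real. indicator {0<..} (snd y) * (ennreal (q y) * indicator {0<..} (fst y))) \<in> borel_measurable (lborel \<Otimes>\<^sub>M lborel)"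
    by measurable
  have "(\<integral>\<^sup>+ v. indicator {0<..} v * (\<integral>\<^sup>+ s. ennreal (q (s, v)) * indicator {0<..} s \<partial>lborel) \<partial>lborel)
     = (\<integral>\<^sup>+ v. (\<integral>\<^sup>+ s. indicator {0<..} v * (ennreal (q (s, v)) * indicator {0<..} s) \<partial>lborel) \<partial>lborel)"
    by (intro nn_integral_cong nn_integral_cmult[symmetric]) (simp add: measurable_lborel1, measurable)
  also have "\<dots> = (\<integral>\<^sup>+ y. indicator {0<..} (snd y) * (ennreal (q y) * indicator {0<..} (fst y)) \<partial>(lborel \<Otimes>\<^sub>M lborel))"
    using lborel_pair.nn_integral_snd[OF m] by simp
  also have "\<dots> = (\<integral>\<^sup>+ y. indicator {0<..} (snd y) * (ennreal (q y) * indicator {0<..} (fst y)) \<partial>lborel)"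
    by (simp add: lborel_prod)
  also have "\<dots> \<le> (\<integral>\<^sup>+ y. indicator upper_half y * ennreal (q y) \<partial>lborel)"
    by (intro nn_integral_mono) (auto simp: indicator_def upper_half_def)
  finally show ?thesis .
qed

definition P1 :: "(real \<times> real \<Rightarrow> real) \<Rightarrow> real \<Rightarrow> ennreal" where
  "P1 w v = (\<integral>\<^sup>+ s. ennreal (w (s, v)) * indicator {0<..} s \<partial>lborel)"
definition P2 :: "(real \<times> real \<Rightarrow> real) \<Rightarrow> real \<Rightarrow> ennreal" where
  "P2 w v = (\<integral>\<^sup>+ s. ennreal ((w (s, v))\<^sup>2) * indicator {0<..} s \<partial>lborel)"

lemma slice_meas:
  fixes q :: "real \<times> real \<Rightarrow> real"
  assumes "q \<in> borel_measurable borel"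
  shows "(\<lambda>v. \<integral>\<^sup>+ s. ennreal (q (s, v)) * indicator {0<..} s \<partial>lborel) \<in> borel_measurable borel"
proof -
  have qm[measurable]: "q \<in> borel_measurable (lborel \<Otimes>\<^sub>M lborel)"
    using assms by (simp add: lborel_prod measurable_lborel1)
  have "(\<lambda>(v, s). ennreal (q (s, v)) * indicator {0<..} s) \<in> borel_measurable (lborel \<Otimes>\<^sub>M lborel)"
    by measurable
  then have "(\<lambda>v. \<integral>\<^sup>+ s. ennreal (q (s, v)) * indicator {0<..} s \<partial>lborel) \<in> borel_measurable lborel"
    by (rule lborel.borel_measurable_nn_integral)
  then show ?thesis by (simp add: measurable_lborel1)
qed

lemma abs_le_sqrt_sum: fixes a b :: real shows "\<bar>a\<bar> \<le> sqrt (a\<^sup>2 + b\<^sup>2)"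
proof -
  have "sqrt (a\<^sup>2) \<le> sqrt (a\<^sup>2 + b\<^sup>2)" by (intro real_sqrt_le_mono) simp
  then show ?thesis by simp
qed

lemma abs_le_sqrt_sum2: fixes a b :: real shows "\<bar>b\<bar> \<le> sqrt (a\<^sup>2 + b\<^sup>2)"
  using abs_le_sqrt_sum[of b a] by (simp add: add.commute)

lemma Kn_kernel:
  fixes x1 x2 y1 v :: real shows
  "Kn (norm ((x1, x2) - (y1, v))) \<le> ennreal (exp (- \<bar>v - x2\<bar> / 2)) * Kn (\<bar>y1 - x1\<bar> / 2)"
proof -
  define r where "r = norm ((x1, x2) - (y1, v))"
  have r1: "\<bar>y1 - x1\<bar> \<le> r" unfolding r_def
    using abs_le_sqrt_sum[of "x1 - y1" "x2 - v"] by (simp add: norm_Pair abs_minus_commute)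
  have r2: "\<bar>v - x2\<bar> \<le> r" unfolding r_def
    using abs_le_sqrt_sum2[of "x1 - y1" "x2 - v"] by (simp add: norm_Pair abs_minus_commute)
  have "Kn r \<le> ennreal (exp (- r / 2)) * Kn (r / 2)" by (rule Kn_half) (simp add: r_def)
  also have "\<dots> \<le> ennreal (exp (- \<bar>v - x2\<bar> / 2)) * Kn (\<bar>y1 - x1\<bar> / 2)"
    using r1 r2 by (intro mult_mono ennreal_leI Kn_antimono) auto
  finally show ?thesis unfolding r_def .
qed

lemma Kn_far:
  fixes x1 x2 y1 v :: real
  assumes "\<bar>x1\<bar> > 4" "\<bar>y1\<bar> < \<bar>x1\<bar> / 2"
  shows "Kn (norm ((x1, x2) - (y1, v))) \<le> ennreal (2 * exp (- \<bar>x1\<bar> / 4))"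
proof -
  define a where "a = \<bar>x1\<bar>"
  have "a / 2 \<le> \<bar>y1 - x1\<bar>" using assms unfolding a_def by linarith
  also have "\<bar>y1 - x1\<bar> \<le> norm ((x1, x2) - (y1, v))"
    using abs_le_sqrt_sum[of "x1 - y1" "x2 - v"] by (simp add: norm_Pair abs_minus_commute)
  finally have "Kn (norm ((x1, x2) - (y1, v))) \<le> Kn (a / 2)" by (rule Kn_antimono)
  also have "\<dots> \<le> ennreal (exp (- (a/2) / 2)) * Kn (a / 2 / 2)"
    using assms by (intro Kn_half) (simp add: a_def)
  also have "\<dots> \<le> ennreal (exp (- (a/2) / 2)) * ennreal (2 / (a/2/2))"
    using assms by (intro mult_left_mono Kn_le_inv) (auto simp: a_def)
  also have "\<dots> = ennreal (exp (- a / 4) * (8 / a))"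
    by (simp add: ennreal_mult'[symmetric])
  also have "\<dots> \<le> ennreal (2 * exp (- a / 4))"
  proof (intro ennreal_leI)
    have "8 / a \<le> 2" using assms by (simp add: a_def field_simps)
    then show "exp (- a / 4) * (8 / a) \<le> 2 * exp (- a / 4)"
      by (metis exp_ge_zero mult.commute mult_right_mono)
  qed
  finally show ?thesis by (simp add: a_def)
qed

lemma inv_cancel: "c > 0 \<Longrightarrow> ennreal (1/c) * (ennreal c * X) = X"
  by (simp add: mult.assoc[symmetric] ennreal_mult[symmetric])

locale stw =
  fixes w :: "real \<times> real \<Rightarrow> real"
  assumes wm: "w \<in> borel_measurable lborel"
  and wpos: "\<forall>y\<in>upper_half. w y \<ge> 0"
  and wsym: "\<forall>a b. b > 0 \<longrightarrow> w (a, b) = w (- a, b)"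
  and wmono: "\<forall>a a' b. b > 0 \<longrightarrow> 0 < a \<longrightarrow> a \<le> a' \<longrightarrow> w (a', b) \<le> w (a, b)"

context stw
begin

lemma wmb[measurable]: "w \<in> borel_measurable borel"
  using wm by (simp add: measurable_lborel1)

lemma w_nonneg: "v > 0 \<Longrightarrow> w (s, v) \<ge> 0"
  using wpos unfolding upper_half_def by force

lemma w_bound1:
  assumes "v > 0" "s0 \<noteq> 0"
  shows "ennreal (w (s0, v)) \<le> ennreal (1 / \<bar>s0\<bar>) * P1 w v"
proof -
  define c where "c = \<bar>s0\<bar>"
  have c: "c > 0" using assms by (simp add: c_def)
  have eq: "w (s0, v) = w (c, v)"
  proof (cases "s0 \<ge> 0")
    case True then show ?thesis by (simp add: c_def)
  next
    case False
    have "w (s0, v) = w (- s0, v)" using wsym assms(1) by blast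
    then show ?thesis using False by (simp add: c_def)
  qed
  have m: "\<And>s. 0 < s \<Longrightarrow> s \<le> c \<Longrightarrow> w (c, v) \<le> w (s, v)" using wmono assms(1) by blast
  have "ennreal (w (c, v)) * ennreal c \<le> P1 w v"
    unfolding P1_def using steiner_gen[of c "\<lambda>s. w (s, v)", OF c m] by simp
  have "ennreal (w (c, v)) = ennreal (1/c) * (ennreal (w (c, v)) * ennreal c)"
    using inv_cancel[OF c, of "ennreal (w (c, v))"] by (simp add: mult.commute)
  also have "\<dots> \<le> ennreal (1/c) * P1 w v"
    by (intro mult_left_mono) (fact, simp)
  finally show ?thesis using eq by (simp add: c_def)
qed

lemma w_bound2:
  assumes "v > 0" "s0 \<noteq> 0"
  shows "ennreal ((w (s0, v))\<^sup>2) \<le> ennreal (1 / \<bar>s0\<bar>) * P2 w v"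
proof -
  define c where "c = \<bar>s0\<bar>"
  have c: "c > 0" using assms by (simp add: c_def)
  have eq: "w (s0, v) = w (c, v)"
  proof (cases "s0 \<ge> 0")
    case True then show ?thesis by (simp add: c_def)
  next
    case False
    have "w (s0, v) = w (- s0, v)" using wsym assms(1) by blast
    then show ?thesis using False by (simp add: c_def)
  qed
  have m: "\<And>s. 0 < s \<Longrightarrow> s \<le> c \<Longrightarrow> w (c, v) \<le> w (s, v)" using wmono assms(1) by blast
  have mono2: "(w (c, v))\<^sup>2 \<le> (w (s, v))\<^sup>2" if "0 < s" "s \<le> c" for s
    using m[OF that] w_nonneg[OF assms(1), of c] by (intro power_mono) auto
  have "ennreal ((w (c, v))\<^sup>2) * ennreal c \<le> P2 w v"
    unfolding P2_def using steiner_gen[of c "\<lambda>s. (w (s, v))\<^sup>2", OF c mono2] by simp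
  have "ennreal ((w (c, v))\<^sup>2) = ennreal (1/c) * (ennreal ((w (c, v))\<^sup>2) * ennreal c)"
    using inv_cancel[OF c, of "ennreal ((w (c, v))\<^sup>2)"] by (simp add: mult.commute)
  also have "\<dots> \<le> ennreal (1/c) * P2 w v"
    by (intro mult_left_mono) (fact, simp)
  finally show ?thesis using eq by (simp add: c_def)
qed

lemma P1_meas[measurable]: "P1 w \<in> borel_measurable borel"
  unfolding P1_def[abs_def] by (rule slice_meas) measurable

lemma P2_meas[measurable]: "P2 w \<in> borel_measurable borel"
  unfolding P2_def[abs_def] using slice_meas[of "\<lambda>y. (w y)\<^sup>2"] by simp

end

lemma fst_b[measurable]: "(fst :: real \<times> real \<Rightarrow> real) \<in> borel_measurable borel"
  by (intro borel_measurable_continuous_onI continuous_intros)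
lemma snd_b[measurable]: "(snd :: real \<times> real \<Rightarrow> real) \<in> borel_measurable borel"
  by (intro borel_measurable_continuous_onI continuous_intros)
lemma amgm_enn:
  fixes W e lam :: real
  assumes "W \<ge> 0" "e \<ge> 0" "lam > 0"
  shows "ennreal (W * e) \<le> ennreal (lam/2) * ennreal (W\<^sup>2) + ennreal (1/(2*lam)) * ennreal (e\<^sup>2)"
proof -
  have "0 \<le> (lam * W - e)\<^sup>2" by simp
  then have "2 * lam * (W * e) \<le> lam * lam * W\<^sup>2 + e\<^sup>2" by (simp add: power2_eq_square algebra_simps)
  then have "W * e \<le> lam/2 * W\<^sup>2 + 1/(2*lam) * e\<^sup>2" using assms
    by (simp add: field_simps power2_eq_square)
  then have "ennreal (W * e) \<le> ennreal (lam/2 * W\<^sup>2 + 1/(2*lam) * e\<^sup>2)" by (rule ennreal_leI)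
  also have "\<dots> = ennreal (lam/2 * W\<^sup>2) + ennreal (1/(2*lam) * e\<^sup>2)"
    by (rule ennreal_plus) (use assms in auto)
  also have "ennreal (lam/2 * W\<^sup>2) = ennreal (lam/2) * ennreal (W\<^sup>2)"
    by (rule ennreal_mult) (use assms in auto)
  also have "ennreal (1/(2*lam) * e\<^sup>2) = ennreal (1/(2*lam)) * ennreal (e\<^sup>2)"
    by (rule ennreal_mult) (use assms in auto)
  finally show ?thesis .
qed

context stw begin

lemma near1:
  fixes x1 x2 :: real assumes ax: "\<bar>x1\<bar> > 4"
  shows "(\<integral>\<^sup>+ y. indicator upper_half y * indicator {y. \<bar>x1\<bar>/2 \<le> \<bar>fst y\<bar>} y * ennreal (w y) * Kn (norm ((x1,x2) - y)) \<partial>lborel)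
     \<le> ennreal (2/\<bar>x1\<bar>) * ((\<integral>\<^sup>+ v. indicator {0<..} v * P1 w v \<partial>lborel) * 8)"
proof -
  define a where "a = \<bar>x1\<bar>"
  have a: "a > 4" using ax by (simp add: a_def)
  have pw: "indicator upper_half y * indicator {y. a/2 \<le> \<bar>fst y\<bar>} y * ennreal (w y) * Kn (norm ((x1,x2) - y))
      \<le> ennreal (2/a) * ((indicator {0<..} (snd y) * P1 w (snd y)) * Kn (\<bar>fst y - x1\<bar>/2))" for y
  proof (cases y)
    case (Pair y1 v)
    show ?thesis
    proof (cases "v > 0 \<and> a/2 \<le> \<bar>y1\<bar>")
      case True
      then have v: "v > 0" and y1: "a/2 \<le> \<bar>y1\<bar>" by auto
      have y10: "y1 \<noteq> 0" using y1 a by auto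
      have "ennreal (w (y1, v)) \<le> ennreal (1/\<bar>y1\<bar>) * P1 w v" by (rule w_bound1[OF v y10])
      also have "\<dots> \<le> ennreal (2/a) * P1 w v"
        using y1 a by (intro mult_right_mono ennreal_leI) (auto simp: field_simps)
      finally have b1: "ennreal (w (y1, v)) \<le> ennreal (2/a) * P1 w v" .
      have "Kn (norm ((x1,x2) - (y1, v))) \<le> ennreal (exp (- \<bar>v - x2\<bar> / 2)) * Kn (\<bar>y1 - x1\<bar> / 2)"
        by (rule Kn_kernel)
      also have "\<dots> \<le> 1 * Kn (\<bar>y1 - x1\<bar> / 2)"
        by (intro mult_right_mono) (auto simp: ennreal_le_1)
      finally have b2: "Kn (norm ((x1,x2) - (y1, v))) \<le> Kn (\<bar>y1 - x1\<bar> / 2)" by simp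
      have "ennreal (w (y1, v)) * Kn (norm ((x1,x2) - (y1, v))) \<le> (ennreal (2/a) * P1 w v) * Kn (\<bar>y1 - x1\<bar> / 2)"
        by (intro mult_mono b1 b2) auto
      then show ?thesis using True Pair by (simp add: indicator_def upper_half_def mult.assoc)
    next
      case False
      then show ?thesis using Pair by (auto simp: indicator_def upper_half_def)
    qed
  qed
  have "(\<integral>\<^sup>+ y. indicator upper_half y * indicator {y. a/2 \<le> \<bar>fst y\<bar>} y * ennreal (w y) * Kn (norm ((x1,x2) - y)) \<partial>lborel)
     \<le> (\<integral>\<^sup>+ y. ennreal (2/a) * ((indicator {0<..} (snd y) * P1 w (snd y)) * Kn (\<bar>fst y - x1\<bar>/2)) \<partial>lborel)"
    by (intro nn_integral_mono pw)
  also have "\<dots> = ennreal (2/a) * (\<integral>\<^sup>+ y. (indicator {0<..} (snd y) * P1 w (snd y)) * Kn (\<bar>fst y - x1\<bar>/2) \<partial>lborel)"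
    by (rule nn_integral_cmult) (simp add: measurable_lborel1, measurable)
  also have "(\<integral>\<^sup>+ y. (indicator {0<..} (snd y) * P1 w (snd y)) * Kn (\<bar>fst y - x1\<bar>/2) \<partial>lborel)
      = (\<integral>\<^sup>+ v. indicator {0<..} v * P1 w v \<partial>lborel) * (\<integral>\<^sup>+ s. Kn (\<bar>s - x1\<bar>/2) \<partial>lborel)"
    by (rule prod_int[where g = "\<lambda>v. indicator {0<..} v * P1 w v" and h = "\<lambda>s. Kn (\<bar>s - x1\<bar>/2)"]) measurable
  also have "\<dots> \<le> (\<integral>\<^sup>+ v. indicator {0<..} v * P1 w v \<partial>lborel) * 8"
    by (intro mult_left_mono Kn_marginal) simp
  finally show ?thesis by (simp add: a_def mult_left_mono)
qed

lemma near2: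
  fixes x1 x2 lam :: real assumes ax: "\<bar>x1\<bar> > 4" and lam: "lam > 0"
  shows "(\<integral>\<^sup>+ y. indicator upper_half y * indicator {y. \<bar>x1\<bar>/2 \<le> \<bar>fst y\<bar>} y * ennreal (w y) * Kn (norm ((x1,x2) - y)) \<partial>lborel)
     \<le> ennreal (lam/\<bar>x1\<bar>) * ((\<integral>\<^sup>+ v. indicator {0<..} v * P2 w v \<partial>lborel) * 8) + ennreal (1/(2*lam)) * (ennreal 2 * 8)"
proof -
  define a where "a = \<bar>x1\<bar>"
  have a: "a > 4" using ax by (simp add: a_def)
  define k where "k = (\<lambda>s. Kn (\<bar>s - x1\<bar>/2))"
  have km[measurable]: "k \<in> borel_measurable borel" unfolding k_def by measurable
  define E where "E = (\<lambda>v. ennreal (exp (- (1 * \<bar>v - x2\<bar>))))"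
  have Em[measurable]: "E \<in> borel_measurable borel" unfolding E_def by measurable
  have pw: "indicator upper_half y * indicator {y. a/2 \<le> \<bar>fst y\<bar>} y * ennreal (w y) * Kn (norm ((x1,x2) - y))
      \<le> ennreal (lam/a) * ((indicator {0<..} (snd y) * P2 w (snd y)) * k (fst y))
        + ennreal (1/(2*lam)) * (E (snd y) * k (fst y))" for y
  proof (cases y)
    case (Pair y1 v)
    show ?thesis
    proof (cases "v > 0 \<and> a/2 \<le> \<bar>y1\<bar>")
      case True
      then have v: "v > 0" and y1: "a/2 \<le> \<bar>y1\<bar>" by auto
      have y10: "y1 \<noteq> 0" using y1 a by auto
      define e where "e = exp (- \<bar>v - x2\<bar> / 2)"
      have e2: "e\<^sup>2 = exp (- (1 * \<bar>v - x2\<bar>))" unfolding e_def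
        by (simp add: power2_eq_square exp_add[symmetric])
      have W: "w (y1, v) \<ge> 0" by (rule w_nonneg[OF v])
      have "ennreal ((w (y1, v))\<^sup>2) \<le> ennreal (1/\<bar>y1\<bar>) * P2 w v" by (rule w_bound2[OF v y10])
      also have "\<dots> \<le> ennreal (2/a) * P2 w v"
        using y1 a by (intro mult_right_mono ennreal_leI) (auto simp: field_simps)
      finally have b1: "ennreal ((w (y1, v))\<^sup>2) \<le> ennreal (2/a) * P2 w v" .
      have "ennreal (w (y1, v)) * Kn (norm ((x1,x2) - (y1, v))) \<le> ennreal (w (y1, v)) * (ennreal e * k y1)"
        unfolding e_def k_def by (intro mult_left_mono Kn_kernel) simp
      also have "\<dots> = ennreal (w (y1, v) * e) * k y1"
        using W by (simp add: ennreal_mult mult.assoc e_def)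
      also have "\<dots> \<le> (ennreal (lam/2) * ennreal ((w (y1, v))\<^sup>2) + ennreal (1/(2*lam)) * ennreal (e\<^sup>2)) * k y1"
        using W lam by (intro mult_right_mono amgm_enn) (auto simp: e_def)
      also have "\<dots> \<le> (ennreal (lam/2) * (ennreal (2/a) * P2 w v) + ennreal (1/(2*lam)) * E v) * k y1"
        unfolding E_def e2[symmetric] by (intro mult_right_mono add_mono mult_left_mono b1) auto
      also have "ennreal (lam/2) * (ennreal (2/a) * P2 w v) = ennreal (lam/a) * P2 w v"
        using lam a by (simp add: mult.assoc[symmetric] ennreal_mult[symmetric])
      finally have "ennreal (w (y1, v)) * Kn (norm ((x1,x2) - (y1, v))) \<le> (ennreal (lam/a) * P2 w v + ennreal (1/(2*lam)) * E v) * k y1" .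
      then show ?thesis using True Pair by (simp add: indicator_def upper_half_def mult.assoc distrib_right)
    next
      case False
      then show ?thesis using Pair by (auto simp: indicator_def upper_half_def)
    qed
  qed
  have "(\<integral>\<^sup>+ y. indicator upper_half y * indicator {y. a/2 \<le> \<bar>fst y\<bar>} y * ennreal (w y) * Kn (norm ((x1,x2) - y)) \<partial>lborel)
     \<le> (\<integral>\<^sup>+ y. ennreal (lam/a) * ((indicator {0<..} (snd y) * P2 w (snd y)) * k (fst y))
        + ennreal (1/(2*lam)) * (E (snd y) * k (fst y)) \<partial>lborel)"
    by (intro nn_integral_mono pw)
  also have "\<dots> = (\<integral>\<^sup>+ y. ennreal (lam/a) * ((indicator {0<..} (snd y) * P2 w (snd y)) * k (fst y)) \<partial>lborel)
        + (\<integral>\<^sup>+ y. ennreal (1/(2*lam)) * (E (snd y) * k (fst y)) \<partial>lborel)"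
    by (rule nn_integral_add) (simp_all add: measurable_lborel1)
  also have "(\<integral>\<^sup>+ y. ennreal (lam/a) * ((indicator {0<..} (snd y) * P2 w (snd y)) * k (fst y)) \<partial>lborel)
     = ennreal (lam/a) * ((\<integral>\<^sup>+ v. indicator {0<..} v * P2 w v \<partial>lborel) * (\<integral>\<^sup>+ s. k s \<partial>lborel))"
    by (subst nn_integral_cmult, simp add: measurable_lborel1, subst prod_int[where g = "\<lambda>v. indicator {0<..} v * P2 w v" and h = k], simp_all)
  also have "(\<integral>\<^sup>+ y. ennreal (1/(2*lam)) * (E (snd y) * k (fst y)) \<partial>lborel)
     = ennreal (1/(2*lam)) * ((\<integral>\<^sup>+ v. E v \<partial>lborel) * (\<integral>\<^sup>+ s. k s \<partial>lborel))"
    by (subst nn_integral_cmult, simp add: measurable_lborel1, subst prod_int[where g = E and h = k], simp_all)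
  also have "ennreal (lam/a) * ((\<integral>\<^sup>+ v. indicator {0<..} v * P2 w v \<partial>lborel) * (\<integral>\<^sup>+ s. k s \<partial>lborel))
       + ennreal (1/(2*lam)) * ((\<integral>\<^sup>+ v. E v \<partial>lborel) * (\<integral>\<^sup>+ s. k s \<partial>lborel))
     \<le> ennreal (lam/a) * ((\<integral>\<^sup>+ v. indicator {0<..} v * P2 w v \<partial>lborel) * 8) + ennreal (1/(2*lam)) * (ennreal 2 * 8)"
  proof -
    have k8: "(\<integral>\<^sup>+ s. k s \<partial>lborel) \<le> 8" unfolding k_def by (rule Kn_marginal)
    have E2: "(\<integral>\<^sup>+ v. E v \<partial>lborel) \<le> ennreal 2" unfolding E_def using exp_abs_int[of 1 x2] by simp
    show ?thesis by (intro add_mono mult_left_mono mult_mono k8 E2) auto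
  qed
  finally show ?thesis by (simp add: a_def)
qed

end

lemma real_final:
  fixes a N1 I2 n :: real
  assumes a: "a > 4" and N1: "N1 \<ge> 0" and I2: "I2 \<ge> 0" and n: "n \<ge> 0"
    and b1: "n \<le> 16 * N1 / a" and b2: "\<And>lam. lam > 0 \<Longrightarrow> n \<le> 8 * (lam * I2 / a + 1 / lam)"
  shows "n \<le> 16 * (a powr (-3/8) * sqrt N1 * sqrt (sqrt I2))"
proof (cases "I2 = 0")
  case True
  have "n = 0"
  proof (rule ccontr)
    assume "n \<noteq> 0"
    then have np: "n > 0" using n by simp
    have "n \<le> 8 * (16/n * I2 / a + 1 / (16/n))" by (rule b2) (use np in simp)
    then have "n \<le> n / 2" using True by simp
    then show False using np by simp
  qed
  then show ?thesis using N1 I2 by simp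
next
  case False
  define q where "q = sqrt I2"
  define r where "r = sqrt a"
  have q: "q > 0" using False I2 by (simp add: q_def)
  have r: "r > 0" using a by (simp add: r_def)
  have I2q: "I2 = q * q" using I2 by (simp add: q_def)
  have ar: "a = r * r" using a by (simp add: r_def)
  have "n \<le> 8 * ((r / q) * I2 / a + 1 / (r / q))" by (rule b2) (use q r in simp)
  also have "\<dots> = 16 * q / r" using q r unfolding I2q ar by (simp add: field_simps)
  finally have nb2: "n \<le> 16 * q / r" .
  have nb1: "n \<le> 16 * N1 / (r * r)" using b1 ar by simp
  define p where "p = a powr (-3/8)"
  have p: "p > 0" using a by (simp add: p_def)
  have rp: "r = a powr (1/2)" using a by (simp add: r_def powr_half_sqrt)
  have "p * p * (r * r * r) = a powr (-3/8 + -3/8 + 1/2 + 1/2 + 1/2)"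
    unfolding p_def rp by (simp only: mult.assoc powr_add[symmetric]) (simp add: algebra_simps)
  also have "\<dots> \<ge> 1" using a by (intro ge_one_powr_ge_zero) auto
  finally have pr: "1 \<le> p * p * (r * r * r)" .
  have "n * n \<le> (16 * N1 / (r * r)) * (16 * q / r)"
    using nb1 nb2 n by (intro mult_mono) auto
  also have "\<dots> = 256 * N1 * q / (r * r * r)" using r by (simp add: field_simps)
  also have "\<dots> \<le> 256 * N1 * q * (p * p)"
  proof -
    have "1 / (r * r * r) \<le> p * p" using pr r by (simp add: field_simps)
    then show ?thesis using N1 q
      by (metis mult_left_mono times_divide_eq_right mult.right_neutral zero_le_numeral mult_nonneg_nonneg less_imp_le)
  qed
  also have "\<dots> = (16 * (p * sqrt N1 * sqrt q))\<^sup>2"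
    using N1 q by (simp add: power2_eq_square real_sqrt_mult[symmetric] algebra_simps)
  finally have "n\<^sup>2 \<le> (16 * (p * sqrt N1 * sqrt q))\<^sup>2" by (simp add: power2_eq_square)
  then have "n \<le> 16 * (p * sqrt N1 * sqrt q)"
    by (rule power2_le_imp_le) (use p N1 q in simp)
  then show ?thesis by (simp add: p_def q_def)
qed

context stw begin

lemma total:
  fixes x1 x2 :: real assumes ax: "\<bar>x1\<bar> > 4"
  shows "(\<integral>\<^sup>+ y. ennreal (indicator upper_half y *\<^sub>R (G_half (x1,x2) y * w y)) \<partial>lborel)
    \<le> ennreal (2 * exp (- \<bar>x1\<bar> / 4)) * (\<integral>\<^sup>+ y. indicator upper_half y * ennreal (w y) \<partial>lborel)
      + (\<integral>\<^sup>+ y. indicator upper_half y * indicator {y. \<bar>x1\<bar>/2 \<le> \<bar>fst y\<bar>} y * ennreal (w y) * Kn (norm ((x1,x2) - y)) \<partial>lborel)"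
proof -
  define a where "a = \<bar>x1\<bar>"
  have pw: "ennreal (indicator upper_half y *\<^sub>R (G_half (x1,x2) y * w y))
     \<le> ennreal (2 * exp (- a / 4)) * (indicator upper_half y * ennreal (w y))
       + indicator upper_half y * indicator {y. a/2 \<le> \<bar>fst y\<bar>} y * ennreal (w y) * Kn (norm ((x1,x2) - y))" for y
  proof (cases "y \<in> upper_half")
    case False
    then show ?thesis by simp
  next
    case True
    obtain y1 v where y: "y = (y1, v)" by (cases y)
    have v: "v > 0" using True y by (simp add: upper_half_def)
    have W: "w y \<ge> 0" using wpos True by blast
    define n1 where "n1 = norm ((x1,x2) - y)"
    have "G_half (x1,x2) y \<le> besselK0 n1"
    proof -
      have "G_half (x1,x2) y \<le> besselK0 n1 / (2 * pi)"
        unfolding G_half_def Gfund_def n1_def using besselK0_nonneg[of "norm (reflect (x1, x2) - y)"] by simp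
      also have "\<dots> \<le> besselK0 n1" using besselK0_nonneg[of n1] pi_gt3
        by (simp add: divide_le_eq mult_le_cancel_left1) 
      finally show ?thesis .
    qed
    then have "G_half (x1,x2) y * w y \<le> besselK0 n1 * w y" using W by (rule mult_right_mono)
    then have "ennreal (indicator upper_half y *\<^sub>R (G_half (x1,x2) y * w y)) \<le> ennreal (besselK0 n1) * ennreal (w y)"
      using True W besselK0_nonneg[of n1] by (simp add: ennreal_mult[symmetric] ennreal_leI)
    also have "\<dots> \<le> Kn n1 * ennreal (w y)" by (intro mult_right_mono besselK0_le_Kn) simp
    also have "\<dots> \<le> ennreal (2 * exp (- a / 4)) * (indicator upper_half y * ennreal (w y))
       + indicator upper_half y * indicator {y. a/2 \<le> \<bar>fst y\<bar>} y * ennreal (w y) * Kn (norm ((x1,x2) - y))"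
    proof (cases "a/2 \<le> \<bar>y1\<bar>")
      case True2: True
      then show ?thesis using True y by (simp add: n1_def mult.commute add_increasing)
    next
      case False2: False
      have "Kn n1 \<le> ennreal (2 * exp (- \<bar>x1\<bar> / 4))"
        unfolding n1_def y by (rule Kn_far) (use ax False2 in \<open>auto simp: a_def\<close>)
      then have "Kn n1 * ennreal (w y) \<le> ennreal (2 * exp (- a / 4)) * ennreal (w y)"
        by (intro mult_right_mono) (auto simp: a_def)
      then show ?thesis using True by (simp add: add_increasing2)
    qed
    finally show ?thesis .
  qed
  have "(\<integral>\<^sup>+ y. ennreal (indicator upper_half y *\<^sub>R (G_half (x1,x2) y * w y)) \<partial>lborel)
     \<le> (\<integral>\<^sup>+ y. ennreal (2 * exp (- a / 4)) * (indicator upper_half y * ennreal (w y))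
       + indicator upper_half y * indicator {y. a/2 \<le> \<bar>fst y\<bar>} y * ennreal (w y) * Kn (norm ((x1,x2) - y)) \<partial>lborel)"
    by (intro nn_integral_mono pw)
  also have "\<dots> = (\<integral>\<^sup>+ y. ennreal (2 * exp (- a / 4)) * (indicator upper_half y * ennreal (w y)) \<partial>lborel)
       + (\<integral>\<^sup>+ y. indicator upper_half y * indicator {y. a/2 \<le> \<bar>fst y\<bar>} y * ennreal (w y) * Kn (norm ((x1,x2) - y)) \<partial>lborel)"
    by (rule nn_integral_add) (simp_all add: measurable_lborel1 upper_half_def)
  also have "(\<integral>\<^sup>+ y. ennreal (2 * exp (- a / 4)) * (indicator upper_half y * ennreal (w y)) \<partial>lborel)
     = ennreal (2 * exp (- a / 4)) * (\<integral>\<^sup>+ y. indicator upper_half y * ennreal (w y) \<partial>lborel)"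
    by (rule nn_integral_cmult) (simp add: measurable_lborel1 upper_half_def)
  finally show ?thesis by (simp add: a_def)
qed

end

lemma enn_arith1:
  fixes a N1 :: real assumes "a > 0" "N1 \<ge> 0"
  shows "ennreal (2/a) * (ennreal N1 * 8) = ennreal (16 * N1 / a)"
proof -
  have "ennreal N1 * 8 = ennreal (N1 * 8)" using assms by (simp add: ennreal_mult)
  moreover have "ennreal (2/a) * ennreal (N1*8) = ennreal (2/a*(N1*8))"
    by (rule ennreal_mult[symmetric]) (use assms in auto)
  moreover have "2/a*(N1*8) = 16 * N1 / a" by simp
  ultimately show ?thesis by simp
qed
lemma enn_arith2:
  fixes a I2 lam :: real assumes "a > 0" "I2 \<ge> 0" "lam > 0"
  shows "ennreal (lam/a) * (ennreal I2 * 8) + ennreal (1/(2*lam)) * (ennreal 2 * 8) = ennreal (8 * (lam * I2 / a + 1 / lam))"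
proof -
  have "ennreal I2 * 8 = ennreal (I2 * 8)" using assms by (simp add: ennreal_mult)
  moreover have "ennreal 2 * 8 = ennreal (2 * 8)" by (simp add: ennreal_mult)
  moreover have "ennreal (lam/a) * ennreal (I2*8) = ennreal (lam/a*(I2*8))"
    by (rule ennreal_mult[symmetric]) (use assms in auto)
  moreover have "ennreal (1/(2*lam)) * ennreal (2*8) = ennreal (1/(2*lam)*(2*8))"
    by (rule ennreal_mult[symmetric]) (use assms in auto)
  moreover have "ennreal (lam/a*(I2*8)) + ennreal (1/(2*lam)*(2*8)) = ennreal (lam/a*(I2*8) + 1/(2*lam)*(2*8))"
    by (rule ennreal_plus[symmetric]) (use assms in auto)
  moreover have "lam/a*(I2*8) + 1/(2*lam)*(2*8) = 8 * (lam * I2 / a + 1 / lam)"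
    using assms by (simp add: field_simps)
  ultimately show ?thesis by metis
qed

context stw begin

lemma L1eq:
  assumes "set_integrable lborel upper_half w"
  shows "(\<integral>\<^sup>+ y. indicator upper_half y * ennreal (w y) \<partial>lborel) = ennreal (Lnorm1 w)"
proof -
  have i: "integrable lborel (\<lambda>y. indicator upper_half y *\<^sub>R w y)" using assms by (simp add: set_integrable_def)
  have i2: "integrable lborel (\<lambda>y. indicator upper_half y *\<^sub>R \<bar>w y\<bar>)"
    using integrable_abs[OF i] by (simp add: abs_mult)
  have "(\<integral>\<^sup>+ y. ennreal (indicator upper_half y *\<^sub>R \<bar>w y\<bar>) \<partial>lborel) = ennreal (integral\<^sup>L lborel (\<lambda>y. indicator upper_half y *\<^sub>R \<bar>w y\<bar>))"
    by (rule nn_integral_eq_integral[OF i2]) auto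
  also have "integral\<^sup>L lborel (\<lambda>y. indicator upper_half y *\<^sub>R \<bar>w y\<bar>) = Lnorm1 w"
    by (simp add: Lnorm1_def set_lebesgue_integral_def)
  also have "(\<integral>\<^sup>+ y. ennreal (indicator upper_half y *\<^sub>R \<bar>w y\<bar>) \<partial>lborel) = (\<integral>\<^sup>+ y. indicator upper_half y * ennreal (w y) \<partial>lborel)"
    using wpos by (intro nn_integral_cong) (auto simp: indicator_def)
  finally show ?thesis .
qed

lemma L2eq:
  assumes "set_integrable lborel upper_half (\<lambda>y. (w y)\<^sup>2)"
  shows "(\<integral>\<^sup>+ y. indicator upper_half y * ennreal ((w y)\<^sup>2) \<partial>lborel) = ennreal (LINT y:upper_half|lborel. (w y)\<^sup>2)"
proof -
  have i: "integrable lborel (\<lambda>y. indicator upper_half y *\<^sub>R (w y)\<^sup>2)" using assms by (simp add: set_integrable_def)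
  have "(\<integral>\<^sup>+ y. ennreal (indicator upper_half y *\<^sub>R (w y)\<^sup>2) \<partial>lborel) = ennreal (integral\<^sup>L lborel (\<lambda>y. indicator upper_half y *\<^sub>R (w y)\<^sup>2))"
    by (rule nn_integral_eq_integral[OF i]) auto
  also have "integral\<^sup>L lborel (\<lambda>y. indicator upper_half y *\<^sub>R (w y)\<^sup>2) = (LINT y:upper_half|lborel. (w y)\<^sup>2)"
    by (simp add: set_lebesgue_integral_def)
  also have "(\<integral>\<^sup>+ y. ennreal (indicator upper_half y *\<^sub>R (w y)\<^sup>2) \<partial>lborel) = (\<integral>\<^sup>+ y. indicator upper_half y * ennreal ((w y)\<^sup>2) \<partial>lborel)"
    by (intro nn_integral_cong) (auto simp: indicator_def)
  finally show ?thesis .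
qed

lemma final_est:
  assumes i1: "set_integrable lborel upper_half w"
    and i2: "set_integrable lborel upper_half (\<lambda>y. (w y)\<^sup>2)"
    and xa: "\<bar>fst x\<bar> > 4"
  shows "G_op w x \<le> 16 * (\<bar>fst x\<bar> powr (-3/8) * sqrt (Lnorm1 w) * sqrt (Lnorm2 w)
                          + exp (- sqrt \<bar>fst x\<bar> / 2) * Lnorm1 w)"
proof -
  obtain x1 x2 where x: "x = (x1, x2)" by (cases x)
  define a where "a = \<bar>x1\<bar>"
  have a: "a > 4" using xa x by (simp add: a_def)
  have ax: "\<bar>x1\<bar> > 4" using a by (simp add: a_def)
  define N1 where "N1 = Lnorm1 w"
  define I2 where "I2 = (LINT y:upper_half|lborel. (w y)\<^sup>2)"
  have N1: "N1 \<ge> 0" unfolding N1_def Lnorm1_def set_lebesgue_integral_def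
    by (intro integral_nonneg_AE) (auto simp: indicator_def)
  have I2: "I2 \<ge> 0" unfolding I2_def set_lebesgue_integral_def
    by (intro integral_nonneg_AE) (auto simp: indicator_def)
  have L2: "Lnorm2 w = sqrt I2" by (simp add: Lnorm2_def I2_def)
  have e1: "(\<integral>\<^sup>+ y. indicator upper_half y * ennreal (w y) \<partial>lborel) = ennreal N1"
    using L1eq[OF i1] by (simp add: N1_def)
  have e2: "(\<integral>\<^sup>+ y. indicator upper_half y * ennreal ((w y)\<^sup>2) \<partial>lborel) = ennreal I2"
    using L2eq[OF i2] by (simp add: I2_def)
  define NEAR where "NEAR = (\<integral>\<^sup>+ y. indicator upper_half y * indicator {y. \<bar>x1\<bar>/2 \<le> \<bar>fst y\<bar>} y * ennreal (w y) * Kn (norm ((x1,x2) - y)) \<partial>lborel)"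
  have hp1: "(\<integral>\<^sup>+ v. indicator {0<..} v * P1 w v \<partial>lborel) \<le> ennreal N1"
    using half_int[of w] e1 unfolding P1_def by simp
  have hp2: "(\<integral>\<^sup>+ v. indicator {0<..} v * P2 w v \<partial>lborel) \<le> ennreal I2"
    using half_int[of "\<lambda>y. (w y)\<^sup>2"] e2 unfolding P2_def by simp
  have n1: "NEAR \<le> ennreal (16 * N1 / a)"
  proof -
    have "NEAR \<le> ennreal (2/a) * ((\<integral>\<^sup>+ v. indicator {0<..} v * P1 w v \<partial>lborel) * 8)"
      unfolding NEAR_def a_def by (rule near1[OF ax])
    also have "\<dots> \<le> ennreal (2/a) * (ennreal N1 * 8)"
      by (intro mult_left_mono mult_right_mono hp1) auto
    also have "\<dots> = ennreal (16 * N1 / a)" using a N1 by (intro enn_arith1) auto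
    finally show ?thesis .
  qed
  have n2: "NEAR \<le> ennreal (8 * (lam * I2 / a + 1 / lam))" if lam: "lam > 0" for lam
  proof -
    have "NEAR \<le> ennreal (lam/a) * ((\<integral>\<^sup>+ v. indicator {0<..} v * P2 w v \<partial>lborel) * 8) + ennreal (1/(2*lam)) * (ennreal 2 * 8)"
      unfolding NEAR_def a_def by (rule near2[OF ax lam])
    also have "\<dots> \<le> ennreal (lam/a) * (ennreal I2 * 8) + ennreal (1/(2*lam)) * (ennreal 2 * 8)"
      by (intro add_mono mult_left_mono mult_right_mono hp2) auto
    also have "\<dots> = ennreal (8 * (lam * I2 / a + 1 / lam))" using a I2 lam by (intro enn_arith2) auto
    finally show ?thesis .
  qed
  define n where "n = enn2real NEAR"
  have nt: "NEAR \<noteq> top" using n1 by (auto simp: top_unique)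
  have NEARn: "NEAR = ennreal n" unfolding n_def using nt by (simp add: ennreal_enn2real_if)
  have n0: "n \<ge> 0" by (simp add: n_def)
  have nb1: "n \<le> 16 * N1 / a" using n1 N1 a unfolding NEARn by (simp add: ennreal_le_iff)
  have nb2: "n \<le> 8 * (lam * I2 / a + 1 / lam)" if "lam > 0" for lam
  proof -
    have pos: "0 \<le> 8 * (lam * I2 / a + 1 / lam)" using that I2 a by simp
    have e: "ennreal n \<le> ennreal (8 * (lam * I2 / a + 1 / lam))" using n2[OF that] by (simp only: NEARn)
    show ?thesis using e ennreal_le_iff[OF pos] by blast
  qed
  have nfin: "n \<le> 16 * (a powr (-3/8) * sqrt N1 * sqrt (sqrt I2))"
    by (rule real_final[OF a N1 I2 n0 nb1 nb2])
  have far: "2 * exp (- a / 4) * N1 \<le> 16 * (exp (- sqrt a / 2) * N1)"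
  proof -
    have sa: "sqrt a \<ge> 2" using a by (simp add: real_le_rsqrt)
    have "sqrt a * sqrt a = a" using a by simp
    moreover have "2 * sqrt a \<le> sqrt a * sqrt a" using sa a by (intro mult_right_mono) auto
    ultimately have "sqrt a / 2 \<le> a / 4" by linarith
    then have ee: "exp (- a / 4) \<le> exp (- sqrt a / 2)" by simp
    have "2 * exp (- a / 4) * N1 \<le> 2 * exp (- sqrt a / 2) * N1"
      using ee N1 by (intro mult_right_mono mult_left_mono) auto
    moreover have "0 \<le> exp (- sqrt a / 2) * N1" using N1 by simp
    ultimately show ?thesis by linarith
  qed
  define R where "R = 16 * (\<bar>fst x\<bar> powr (-3/8) * sqrt (Lnorm1 w) * sqrt (Lnorm2 w)
                          + exp (- sqrt \<bar>fst x\<bar> / 2) * Lnorm1 w)"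
  have R: "2 * exp (- a / 4) * N1 + n \<le> R"
    using far nfin unfolding R_def x a_def N1_def L2 by (simp add: algebra_simps)
  have "(\<integral>\<^sup>+ y. ennreal (indicator upper_half y *\<^sub>R (G_half x y * w y)) \<partial>lborel)
      \<le> ennreal (2 * exp (- a / 4)) * ennreal N1 + ennreal n"
    using total[OF ax, of x2] unfolding x e1 NEARn[unfolded NEAR_def] a_def by simp
  also have "\<dots> = ennreal (2 * exp (- a / 4) * N1 + n)"
    using N1 n0 by (simp add: ennreal_mult)
  also have "\<dots> \<le> ennreal R" using R by (rule ennreal_leI)
  finally have T: "(\<integral>\<^sup>+ y. ennreal (indicator upper_half y *\<^sub>R (G_half x y * w y)) \<partial>lborel) \<le> ennreal R" .
  have "0 \<le> 2 * exp (- a / 4) * N1" using N1 by simp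
  then have R0: "R \<ge> 0" using R n0 by linarith
  have "G_op w x = integral\<^sup>L lborel (\<lambda>y. indicator upper_half y *\<^sub>R (G_half x y * w y))"
    by (simp add: G_op_def set_lebesgue_integral_def)
  also have "\<dots> \<le> R" by (rule integral_real_bounded[OF R0 T])
  finally show ?thesis unfolding R_def .
qed

end

theorem lemma3p4:
  shows "\<exists>C>0. \<forall>\<omega> :: real \<times> real \<Rightarrow> real.
    (\<omega> \<in> borel_measurable lborel \<and>
     set_integrable lborel upper_half \<omega> \<and>
     set_integrable lborel upper_half (\<lambda>y. (\<omega> y)\<^sup>2) \<and>
     (\<forall>y\<in>upper_half. \<omega> y \<ge> 0) \<and>
     (\<forall>a b. b > 0 \<longrightarrow> \<omega> (a, b) = \<omega> (- a, b)) \<and>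
     (\<forall>a a' b. b > 0 \<longrightarrow> 0 < a \<longrightarrow> a \<le> a' \<longrightarrow> \<omega> (a', b) \<le> \<omega> (a, b)))
    \<longrightarrow> (\<forall>x\<in>upper_half. \<bar>fst x\<bar> > 4 \<longrightarrow>
          G_op \<omega> x \<le> C * (\<bar>fst x\<bar> powr (-3/8) * sqrt (Lnorm1 \<omega>) * sqrt (Lnorm2 \<omega>)
                          + exp (- sqrt \<bar>fst x\<bar> / 2) * Lnorm1 \<omega>))"
proof (intro exI[of _ 16] conjI allI impI ballI)
  fix \<omega> :: "real \<times> real \<Rightarrow> real" and x :: "real \<times> real"
  assume h: "\<omega> \<in> borel_measurable lborel \<and>
     set_integrable lborel upper_half \<omega> \<and>
     set_integrable lborel upper_half (\<lambda>y. (\<omega> y)\<^sup>2) \<and>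
     (\<forall>y\<in>upper_half. \<omega> y \<ge> 0) \<and>
     (\<forall>a b. b > 0 \<longrightarrow> \<omega> (a, b) = \<omega> (- a, b)) \<and>
     (\<forall>a a' b. b > 0 \<longrightarrow> 0 < a \<longrightarrow> a \<le> a' \<longrightarrow> \<omega> (a', b) \<le> \<omega> (a, b))"
    and xa: "\<bar>fst x\<bar> > 4"
  note h1 = h[THEN conjunct1] and h2 = h[THEN conjunct2, THEN conjunct1]
    and h3 = h[THEN conjunct2, THEN conjunct2, THEN conjunct1]
    and h4 = h[THEN conjunct2, THEN conjunct2, THEN conjunct2, THEN conjunct1]
    and h5 = h[THEN conjunct2, THEN conjunct2, THEN conjunct2, THEN conjunct2, THEN conjunct1]
    and h6 = h[THEN conjunct2, THEN conjunct2, THEN conjunct2, THEN conjunct2, THEN conjunct2]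
  interpret stw \<omega> by (rule stw.intro[OF h1 h4 h5 h6])
  show "G_op \<omega> x \<le> 16 * (\<bar>fst x\<bar> powr (-3/8) * sqrt (Lnorm1 \<omega>) * sqrt (Lnorm2 \<omega>)
                          + exp (- sqrt \<bar>fst x\<bar> / 2) * Lnorm1 \<omega>)"
    by (rule final_est[OF h2 h3 xa])
qed simp

end
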